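(* Let $\phi$ be a highly self-concordant barrier on an open convex set $K\subset\mathbb R^n$ and $g(x)=\nabla^2\phi(x)$. Then for all $x,y\in K$ with $\|y-x\|_{g(x)}<1$ and all $v,w\in\mathbb R^n$: (a) $\|Dg(x)[v,v]-Dg(y)[v,v]\|_{g(x)^{-1}}\le\frac{6}{(1-\|y-x\|_{g(x)})^3}\|v\|_{g(x)}^2\|y-x\|_{g(x)}$; (b) $\|Dg(x)[v,v]-Dg(x)[w,w]\|_{g(x)^{-1}}\le2\|v-w\|_{g(x)}\|v+w\|_{g(x)}$.
   Context: A highly self-concordant barrier $\phi:K\to\mathbb R$ is a convex $C^4$ function with $\phi(x)\to\infty$ as $x\to\partial K$, $|D^3\phi(x)[h,h,h]|\le2(D^2\phi(x)[h,h])^{3/2}$ and $|D^4\phi(x)[h,h,h,h]|\le6(D^2\phi(x)[h,h])^2$ for all $x\in K$, $h\in\mathbb R^n$. $\|u\|_{g(x)}=\sqrt{u^\top g(x)u}$, $\|u\|_{g(x)^{-1}}=\sqrt{u^\top g(x)^{-1}u}$. $Dg(x)[u,w]\in\mathbb R^n$ is the vector with $i$-th coordinate $u^\top\partial_ig(x)w=D^3\phi(x)[e_i,u,w]$. *)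

theory Defs
  imports "HOL-Analysis.Analysis"
begin

text \<open>Iterated directional (Frechet) derivatives:
  dderiv f [h1,...,hk] x = D^k f(x)[h1,...,hk].\<close>
fun dderiv :: "('a::real_normed_vector \<Rightarrow> real) \<Rightarrow> 'a list \<Rightarrow> 'a \<Rightarrow> real" where
  "dderiv f [] = f"
| "dderiv f (h # hs) = (\<lambda>x. frechet_derivative (dderiv f hs) (at x) h)"

definition C_k_on :: "nat \<Rightarrow> 'a::real_normed_vector set \<Rightarrow> ('a \<Rightarrow> real) \<Rightarrow> bool" where
  "C_k_on k K f \<longleftrightarrow>
     (\<forall>hs. length hs < k \<longrightarrow> (\<forall>x\<in>K. dderiv f hs differentiable (at x))) \<and>
     (\<forall>hs. length hs = k \<longrightarrow> continuous_on K (dderiv f hs))"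

definition hess :: "(real^'n \<Rightarrow> real) \<Rightarrow> real^'n \<Rightarrow> real^'n^'n" where
  "hess \<phi> x = (\<chi> i j. dderiv \<phi> [axis i 1, axis j 1] x)"

definition Dg :: "(real^'n \<Rightarrow> real) \<Rightarrow> real^'n \<Rightarrow> real^'n \<Rightarrow> real^'n \<Rightarrow> real^'n" where
  "Dg \<phi> x u w = (\<chi> i. dderiv \<phi> [axis i 1, u, w] x)"

definition lnorm :: "real^'n^'n \<Rightarrow> real^'n \<Rightarrow> real" where
  "lnorm A u = sqrt (u \<bullet> (A *v u))"

definition hsc_barrier :: "(real^'n) set \<Rightarrow> (real^'n \<Rightarrow> real) \<Rightarrow> bool" where
  "hsc_barrier K \<phi> \<longleftrightarrow>
     convex_on K \<phi> \<and> C_k_on 4 K \<phi> \<and>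
     (\<forall>z\<in>frontier K. filterlim \<phi> at_top (at z within K)) \<and>
     (\<forall>x\<in>K. \<forall>h. \<bar>dderiv \<phi> [h,h,h] x\<bar> \<le> 2 * (dderiv \<phi> [h,h] x) powr (3/2)) \<and>
     (\<forall>x\<in>K. \<forall>h. \<bar>dderiv \<phi> [h,h,h,h] x\<bar> \<le> 6 * (dderiv \<phi> [h,h] x)\<^sup>2) \<and>
     (\<forall>x\<in>K. invertible (hess \<phi> x))"

end

theory Submission
  imports Defs "HOL-Analysis.Analysis"
begin

lemma cubic_identity:
  fixes A B C D c e r :: real
  assumes cs: "c^2 + e^2 = 1" and r: "r^2 = 3"
  shows "72 * ((4*c^3-3*c)*A + (3*e-4*e^3)*B) =
     8 * (4*c^2-1)^2 * (c^3*A + 3*c^2*e*B + 3*c*e^2*C + e^3*D)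
     + 4*e^2*(2*r*c*e-2*c^2-1) * ((c - r*e)^3*A + 3*(c - r*e)^2*(e + r*c)*B + 3*(c - r*e)*(e + r*c)^2*C + (e + r*c)^3*D)
     + 4*e^2*(2*r*c*e+2*c^2+1) * ((-c - r*e)^3*A + 3*(-c - r*e)^2*(-e + r*c)*B + 3*(-c - r*e)*(-e + r*c)^2*C + (-e + r*c)^3*D)"
  using cs r by algebra

lemma sin_treble: "sin (3 * x) = 3 * sin x - 4 * sin (x::real)^3"
proof -
  have "sin (3 * x) = sin (2 * x + x)" by simp
  also have "\<dots> = sin (2 * x) * cos x + cos (2 * x) * sin x" by (rule sin_add)
  also have "\<dots> = 2 * sin x * cos x * cos x + (1 - 2 * sin x ^ 2) * sin x"
    by (simp only: sin_double cos_double_sin)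
  also have "\<dots> = 2 * sin x * (cos x)^2 + (1 - 2 * sin x ^ 2) * sin x"
    by (simp add: power2_eq_square)
  also have "\<dots> = 3 * sin x - 4 * sin x^3"
    unfolding cos_squared_eq by (simp add: power3_eq_cube power2_eq_square algebra_simps)
  finally show ?thesis .
qed

lemma cubic_bound:
  fixes A B C D M lam mu :: real
  assumes lm: "lam^2 + mu^2 = 1"
    and bnd: "\<And>x y. x^2+y^2 = 1 \<Longrightarrow> \<bar>x^3* A + 3* x^2* y* B + 3* x* y^2* C + y^3* D\<bar> \<le> M"
  shows "\<bar>lam* A + mu* B\<bar> \<le> M"
proof -
  define p where "p = (\<lambda>x y::real. x^3* A + 3* x^2* y* B + 3* x* y^2* C + y^3* D)"
  obtain t where t: "lam = cos t" "mu = sin t" using sincos_total_2pi[OF lm] by metis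
  define c where "c = cos (t/3)"
  define e where "e = sin (t/3)"
  define r where "r = sqrt 3"
  have cs: "c^2 + e^2 = 1" unfolding c_def e_def by simp
  have r2: "r^2 = 3" unfolding r_def by simp
  have r0: "r \<ge> 0" unfolding r_def by simp
  have lam: "lam = 4* c^3-3* c" unfolding t c_def using cos_treble_cos[of "t/3"] by simp
  have mu: "mu = 3* e-4* e^3" unfolding t e_def using sin_treble[of "t/3"] by simp
  have id: "72 * ((4* c^3-3* c)* A + (3* e-4* e^3)* B) =
     8 * (4* c^2-1)^2 * p c e
     + 4* e^2*(2* r* c* e-2* c^2-1) * (8 * p ((c - r* e)/2) ((e + r* c)/2))
     + 4* e^2*(2* r* c* e+2* c^2+1) * (8 * p ((-c - r* e)/2) ((-e + r* c)/2))"
  proof -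
    have ph: "\<And>a b. 8 * p (a/2) (b/2) = p a b" unfolding p_def
      by (simp add: field_simps power3_eq_cube power2_eq_square)
    show ?thesis unfolding ph unfolding p_def by (rule cubic_identity[OF cs r2])
  qed
  define w0 where "w0 = (4* c^2-1)^2/9"
  define w1 where "w1 = 4* e^2/9*(2* r* c* e-2* c^2-1)"
  define w2 where "w2 = 4* e^2/9*(2* r* c* e+2* c^2+1)"
  have L: "lam* A + mu* B = w0 * p c e + w1 * p ((c - r* e)/2) ((e + r* c)/2) + w2 * p ((-c - r* e)/2) ((-e + r* c)/2)"
  proof -
    have "72 * (w0 * p c e + w1 * p ((c - r* e)/2) ((e + r* c)/2) + w2 * p ((-c - r* e)/2) ((-e + r* c)/2))
      = 8 * (4* c^2-1)^2 * p c e
     + 4* e^2*(2* r* c* e-2* c^2-1) * (8 * p ((c - r* e)/2) ((e + r* c)/2))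
     + 4* e^2*(2* r* c* e+2* c^2+1) * (8 * p ((-c - r* e)/2) ((-e + r* c)/2))"
      unfolding w0_def w1_def w2_def by (simp add: field_simps)
    from id this[symmetric] have "72 * ((4* c^3-3* c)* A + (3* e-4* e^3)* B) = 72 * (w0 * p c e + w1 * p ((c - r* e)/2) ((e + r* c)/2) + w2 * p ((-c - r* e)/2) ((-e + r* c)/2))"
      by (rule trans)
    then show ?thesis unfolding lam mu by simp
  qed
  have sq: "(2* r* c* e)^2 \<le> (2* c^2+1)^2"
  proof -
    have "(2* c^2+1)^2 - (2* r* c* e)^2 = (4* c^2-1)^2"
      using cs r2 by algebra
    then show ?thesis by (smt (verit) zero_le_power2)
  qed
  have ab: "\<bar>2* r* c* e\<bar> \<le> 2* c^2+1"
    using sq by (simp add: power2_le_iff_abs_le[symmetric] add_nonneg_nonneg)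
  have w0p: "w0 \<ge> 0" unfolding w0_def by simp
  have w1n: "w1 \<le> 0" unfolding w1_def using ab
    by (intro mult_nonneg_nonpos) auto
  have w2p: "w2 \<ge> 0" unfolding w2_def using ab
    by (intro mult_nonneg_nonneg) auto
  have wsum: "w0 - w1 + w2 = 1"
  proof -
    have "9*(w0 - w1 + w2) = 9" unfolding w0_def w1_def w2_def
      using cs by algebra
    then show ?thesis by simp
  qed
  have p0: "\<bar>p c e\<bar> \<le> M" unfolding p_def by (rule bnd[OF cs])
  have u1: "(c - r* e)^2 + (e + r* c)^2 = 4" using cs r2 by algebra
  have u2: "(-c - r* e)^2 + (r* c - e)^2 = 4" using cs r2 by algebra
  have p1: "\<bar>p ((c - r* e)/2) ((e + r* c)/2)\<bar> \<le> M" unfolding p_def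
    by (rule bnd) (simp add: power_divide add_divide_distrib[symmetric] u1 u2)
  have p2: "\<bar>p ((-c - r* e)/2) ((-e + r* c)/2)\<bar> \<le> M" unfolding p_def
    by (rule bnd) (simp add: power_divide add_divide_distrib[symmetric] u1 u2)
  have "\<bar>lam* A + mu* B\<bar> \<le> \<bar>w0 * p c e\<bar> + \<bar>w1 * p ((c - r* e)/2) ((e + r* c)/2)\<bar> + \<bar>w2 * p ((-c - r* e)/2) ((-e + r* c)/2)\<bar>"
    unfolding L by linarith
  also have "\<dots> \<le> w0 * M + (-w1) * M + w2 * M"
    using w0p w1n w2p p0 p1 p2
    by (intro add_mono) (auto simp: abs_mult intro: mult_left_mono mult_left_mono_neg)
  also have "\<dots> = (w0 - w1 + w2) * M" by (simp add: algebra_simps)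
  also have "\<dots> = M" using wsum by simp
  finally show ?thesis .
qed

locale ipform =
  fixes B :: "'a::real_vector \<Rightarrow> 'a \<Rightarrow> real"
  assumes B_lin: "\<And>b. linear (\<lambda>a. B a b)"
    and B_sym: "\<And>a b. B a b = B b a"
    and B_pos: "\<And>a. a \<noteq> 0 \<Longrightarrow> B a a > 0"
begin

lemma B_lin2: "linear (\<lambda>b. B a b)"
  using B_lin[of a] by (subst B_sym) 

lemma B_add1: "B (x + y) z = B x z + B y z" using linear_add[OF B_lin] .
lemma B_add2: "B z (x + y) = B z x + B z y" using linear_add[OF B_lin2] .
lemma B_diff1: "B (x - y) z = B x z - B y z" using linear_diff[OF B_lin] .
lemma B_diff2: "B z (x - y) = B z x - B z y" using linear_diff[OF B_lin2] .
lemma B_scale1: "B (r *\<^sub>R x) z = r * B x z" using linear_scale[OF B_lin] by simp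
lemma B_scale2: "B z (r *\<^sub>R x) = r * B z x" using linear_scale[OF B_lin2] by simp
lemma B_zero1: "B 0 z = 0" using linear_0[OF B_lin] .
lemma B_zero2: "B z 0 = 0" using linear_0[OF B_lin2] .
lemma B_neg1: "B (- x) z = - B x z" using linear_neg[OF B_lin] .
lemma B_neg2: "B z (- x) = - B z x" using linear_neg[OF B_lin2] .
lemmas B_simps = B_add1 B_add2 B_diff1 B_diff2 B_scale1 B_scale2 B_zero1 B_zero2 B_neg1 B_neg2

lemma B_nonneg: "B a a \<ge> 0"
proof (cases "a = 0")
  case True then show ?thesis by (simp add: B_zero1)
next
  case False then show ?thesis using B_pos[of a] by simp
qed

definition nrm where "nrm a = sqrt (B a a)"

lemma nrm_nonneg: "nrm a \<ge> 0" unfolding nrm_def by (simp add: B_nonneg)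
lemma nrm_sq: "nrm a ^ 2 = B a a" unfolding nrm_def by (simp add: B_nonneg)
lemma nrm_pos: "a \<noteq> 0 \<Longrightarrow> nrm a > 0" unfolding nrm_def using B_pos by simp
lemma nrm_scale: "nrm (r *\<^sub>R a) = \<bar>r\<bar> * nrm a"
proof -
  have "B (r *\<^sub>R a) (r *\<^sub>R a) = r^2 * B a a" by (simp add: B_simps power2_eq_square)
  then show ?thesis unfolding nrm_def by (simp add: real_sqrt_mult)
qed
lemma nrm_zero_iff: "nrm a = 0 \<longleftrightarrow> a = 0"
  using nrm_pos[of a] by (cases "a = 0") (auto simp: nrm_def B_simps)

lemma normalize_unit: "a \<noteq> 0 \<Longrightarrow> B (a /\<^sub>R nrm a) (a /\<^sub>R nrm a) = 1"
  using nrm_pos[of a] nrm_sq[of a] B_pos[of a] by (simp add: B_simps power2_eq_square field_simps)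

lemma bilinear_bound:
  fixes Q :: "'a \<Rightarrow> 'a \<Rightarrow> real"
  assumes Q_lin: "\<And>b. linear (\<lambda>a. Q a b)" and Q_sym: "\<And>a b. Q a b = Q b a"
    and bnd: "\<And>h. \<bar>Q h h\<bar> \<le> M * B h h"
  shows "\<bar>Q a b\<bar> \<le> M * nrm a * nrm b"
proof -
  have Q_lin2: "linear (\<lambda>b. Q a b)" for a using Q_lin[of a] by (subst Q_sym)
  note Qs = linear_add[OF Q_lin] linear_add[OF Q_lin2] linear_diff[OF Q_lin] linear_diff[OF Q_lin2]
     linear_scale[OF Q_lin] linear_scale[OF Q_lin2]
  show ?thesis
  proof (cases "a = 0 \<or> b = 0")
    case True
    then show ?thesis using linear_0[OF Q_lin] linear_0[OF Q_lin2] by (auto simp: nrm_def B_simps)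
  next
    case False
    define \<alpha> where "\<alpha> = nrm a"
    define \<beta> where "\<beta> = nrm b"
    have \<alpha>: "\<alpha> > 0" and \<beta>: "\<beta> > 0" using False nrm_pos unfolding \<alpha>_def \<beta>_def by auto
    define x where "x = \<beta> *\<^sub>R a"
    define y where "y = \<alpha> *\<^sub>R b"
    have e: "4 * Q x y = Q (x+y) (x+y) - Q (x-y) (x-y)"
      by (simp add: Qs Q_sym[of y x] algebra_simps)
    have "\<bar>Q (x+y) (x+y) - Q (x-y) (x-y)\<bar> \<le> M * B (x+y) (x+y) + M * B (x-y) (x-y)"
      using bnd[of "x+y"] bnd[of "x-y"] by linarith
    also have "\<dots> = M * (2 * B x x + 2 * B y y)"
      by (simp add: B_simps B_sym[of y x] algebra_simps)
    also have "\<dots> = M * (4 * (\<alpha>^2 * \<beta>^2))"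
    proof -
      have "B x x = \<beta>^2 * B a a" "B y y = \<alpha>^2 * B b b"
        by (simp_all add: x_def y_def B_simps power2_eq_square)
      then show ?thesis using nrm_sq[of a] nrm_sq[of b] unfolding \<alpha>_def \<beta>_def
        by (simp add: algebra_simps)
    qed
    finally have "\<bar>4 * Q x y\<bar> \<le> M * (4 * (\<alpha>^2 * \<beta>^2))" using e by simp
    moreover have "Q x y = \<alpha> * \<beta> * Q a b" unfolding x_def y_def by (simp add: Qs)
    ultimately have "\<alpha> * \<beta> * \<bar>Q a b\<bar> \<le> \<alpha> * \<beta> * (M * \<alpha> * \<beta>)"
      using \<alpha> \<beta> by (simp add: abs_mult power2_eq_square algebra_simps)
    then have "\<bar>Q a b\<bar> \<le> M * \<alpha> * \<beta>"
      using \<alpha> \<beta> by (simp add: mult_le_cancel_left_pos)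
    then show ?thesis unfolding \<alpha>_def \<beta>_def .
  qed
qed

end

context ipform begin

lemma unit_decomp:
  assumes u1: "B u1 u1 = 1" and a1: "B a1 a1 = 1"
  obtains "a1 = B u1 a1 *\<^sub>R u1" "(B u1 a1)^2 = 1"
  | v mu where "B v v = 1" "B u1 v = 0" "a1 = B u1 a1 *\<^sub>R u1 + mu *\<^sub>R v" "(B u1 a1)^2 + mu^2 = 1" 
proof -
  define l where "l = B u1 a1"
  define w where "w = a1 - l *\<^sub>R u1"
  have uw: "B u1 w = 0" unfolding w_def l_def using u1 by (simp add: B_simps)
  have ww: "B w w = 1 - l^2" unfolding w_def l_def using u1 a1
    by (simp add: B_simps B_sym[of a1 u1] power2_eq_square)
  show ?thesis
  proof (cases "w = 0")
    case True
    then have "a1 = l *\<^sub>R u1" unfolding w_def by simp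
    moreover have "l^2 = 1" using ww True by (simp add: B_simps)
    ultimately show ?thesis using that(1) unfolding l_def by blast
  next
    case False
    define mu where "mu = nrm w"
    have mu: "mu > 0" using nrm_pos[OF False] unfolding mu_def .
    define v where "v = w /\<^sub>R mu"
    have "B v v = 1" unfolding v_def mu_def using normalize_unit[OF False] .
    moreover have "B u1 v = 0" unfolding v_def using uw by (simp add: B_simps)
    moreover have "a1 = l *\<^sub>R u1 + mu *\<^sub>R v" unfolding v_def w_def using mu by simp
    moreover have "l^2 + mu^2 = 1" using ww nrm_sq[of w] unfolding mu_def by simp
    ultimately show ?thesis using that(2) unfolding l_def by blast
  qed
qed

lemma tri_bound:
  fixes T :: "'a \<Rightarrow> 'a \<Rightarrow> 'a \<Rightarrow> real"
  assumes T_lin: "\<And>b c. linear (\<lambda>a. T a b c)"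
    and T_s12: "\<And>a b c. T a b c = T b a c" and T_s23: "\<And>a b c. T a b c = T a c b"
    and bnd: "\<And>h. \<bar>T h h h\<bar> \<le> M * nrm h ^ 3"
  shows "\<bar>T a b c\<bar> \<le> M * nrm a * nrm b * nrm c"
proof -
  have T_lin2: "linear (\<lambda>b. T a b c)" for a c using T_lin[of a c] by (subst T_s12)
  have T_lin3: "linear (\<lambda>c. T a b c)" for a b using T_lin2[of a b] by (subst T_s23)
  note Ts = linear_add[OF T_lin] linear_add[OF T_lin2] linear_add[OF T_lin3]
     linear_diff[OF T_lin] linear_diff[OF T_lin2] linear_diff[OF T_lin3]
     linear_scale[OF T_lin] linear_scale[OF T_lin2] linear_scale[OF T_lin3]
     linear_0[OF T_lin] linear_0[OF T_lin2] linear_0[OF T_lin3]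
  have unit: "\<bar>T u1 u1 a1\<bar> \<le> M" if u1: "B u1 u1 = 1" and a1: "B a1 a1 = 1" for u1 a1
  proof -
    have n1: "nrm u1 = 1" using u1 unfolding nrm_def by simp
    from unit_decomp[OF u1 a1] show ?thesis
    proof cases
      case 1
      then have "T u1 u1 a1 = B u1 a1 * T u1 u1 u1" by (metis Ts(9) real_scaleR_def)
      moreover have "\<bar>B u1 a1\<bar> = 1" using 1(2) unfolding power2_eq_1_iff by auto
      ultimately show ?thesis using bnd[of u1] n1 by (simp add: abs_mult)
    next
      case (2 v mu)
      define l where "l = B u1 a1"
      have exp: "T (x *\<^sub>R u1 + y *\<^sub>R v) (x *\<^sub>R u1 + y *\<^sub>R v) (x *\<^sub>R u1 + y *\<^sub>R v) =
         x^3 * T u1 u1 u1 + 3 * x^2 * y * T u1 u1 v + 3 * x * y^2 * T u1 v v + y^3 * T v v v" for x y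
      proof -
        have e1: "T u1 v u1 = T u1 u1 v" "T v u1 u1 = T u1 u1 v" "T v u1 v = T u1 v v" "T v v u1 = T u1 v v"
          by (metis T_s12 T_s23)+
        show ?thesis by (simp add: Ts e1) (simp add: power2_eq_square power3_eq_cube algebra_simps)
      qed
      have "\<bar>l * T u1 u1 u1 + mu * T u1 u1 v\<bar> \<le> M"
      proof (rule cubic_bound[where C = "T u1 v v" and D = "T v v v"])
        show "l^2 + mu^2 = 1" using 2 unfolding l_def by simp
        fix x y :: real assume xy: "x^2 + y^2 = 1"
        have "B (x *\<^sub>R u1 + y *\<^sub>R v) (x *\<^sub>R u1 + y *\<^sub>R v) = x^2 + y^2"
          using u1 2 by (simp add: B_simps B_sym[of v u1] power2_eq_square)
        then have "nrm (x *\<^sub>R u1 + y *\<^sub>R v) = 1" unfolding nrm_def using xy by simp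
        then show "\<bar>x ^ 3 * T u1 u1 u1 + 3 * x\<^sup>2 * y * T u1 u1 v + 3 * x * y\<^sup>2 * T u1 v v + y ^ 3 * T v v v\<bar> \<le> M"
          using bnd[of "x *\<^sub>R u1 + y *\<^sub>R v"] exp by simp
      qed
      moreover have "T u1 u1 a1 = l * T u1 u1 u1 + mu * T u1 u1 v"
        by (subst 2(3)) (simp add: Ts l_def)
      ultimately show ?thesis by simp
    qed
  qed
  have uua: "\<bar>T u u a\<bar> \<le> M * nrm u ^ 2 * nrm a" for u a
  proof (cases "u = 0 \<or> a = 0")
    case True
    then show ?thesis by (auto simp: Ts nrm_def B_simps)
  next
    case False
    define u1 where "u1 = u /\<^sub>R nrm u"
    define a1 where "a1 = a /\<^sub>R nrm a"
    have pu: "nrm u > 0" and pa: "nrm a > 0" using False nrm_pos by auto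
    have "T u u a = nrm u ^ 2 * nrm a * T u1 u1 a1"
      unfolding u1_def a1_def using pu pa by (simp add: Ts power2_eq_square field_simps)
    moreover have "\<bar>T u1 u1 a1\<bar> \<le> M" 
      using unit normalize_unit False unfolding u1_def a1_def by blast
    ultimately show ?thesis using pu pa by (simp add: abs_mult mult_left_mono)
  qed
  have "\<bar>T a b c\<bar> \<le> (M * nrm c) * nrm a * nrm b"
  proof (rule bilinear_bound[where Q = "\<lambda>a b. T a b c"])
    show "linear (\<lambda>a. T a b c)" for b by (rule T_lin)
    show "T a b c = T b a c" for a b by (rule T_s12)
    show "\<bar>T h h c\<bar> \<le> M * nrm c * B h h" for h using uua[of h c] nrm_sq[of h] by (simp add: algebra_simps)
  qed
  then show ?thesis by (simp add: algebra_simps)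
qed

end

context ipform begin

lemma quad_bound:
  fixes T :: "'a \<Rightarrow> 'a \<Rightarrow> 'a \<Rightarrow> 'a \<Rightarrow> real"
  assumes T_lin: "\<And>b c d. linear (\<lambda>a. T a b c d)"
    and T_s12: "\<And>a b c d. T a b c d = T b a c d" and T_s23: "\<And>a b c d. T a b c d = T a c b d"
    and T_s34: "\<And>a b c d. T a b c d = T a b d c"
    and bnd: "\<And>h. \<bar>T h h h h\<bar> \<le> M * (B h h)^2"
  shows "\<bar>T a b c c\<bar> \<le> M * nrm a * nrm b * B c c"
proof -
  have T_lin2: "linear (\<lambda>b. T a b c d)" for a c d using T_lin[of a c d] by (subst T_s12)
  have T_lin3: "linear (\<lambda>c. T a b c d)" for a b d using T_lin2[of a b d] by (subst T_s23)
  have T_lin4: "linear (\<lambda>d. T a b c d)" for a b c using T_lin3[of a b c] by (subst T_s34)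
  note Ts = linear_add[OF T_lin] linear_add[OF T_lin2] linear_add[OF T_lin3] linear_add[OF T_lin4]
     linear_diff[OF T_lin] linear_diff[OF T_lin2] linear_diff[OF T_lin3] linear_diff[OF T_lin4]
     linear_scale[OF T_lin] linear_scale[OF T_lin2] linear_scale[OF T_lin3] linear_scale[OF T_lin4]
     linear_0[OF T_lin] linear_0[OF T_lin2] linear_0[OF T_lin3] linear_0[OF T_lin4]
     linear_neg[OF T_lin] linear_neg[OF T_lin2] linear_neg[OF T_lin3] linear_neg[OF T_lin4]
  have perm: "T p p q p = T p p p q" "T p q p p = T p p p q" "T q p p p = T p p p q"
      "T p q p q = T p p q q" "T p q q p = T p p q q" "T q p p q = T p p q q"
      "T q p q p = T p p q q" "T q q p p = T p p q q"
      "T q p q q = T p q q q" "T q q p q = T p q q q" "T q q q p = T p q q q" for p q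
      by (metis T_s12 T_s23 T_s34)+
  have E4: "T (x *\<^sub>R p + y *\<^sub>R q) (x *\<^sub>R p + y *\<^sub>R q) (x *\<^sub>R p + y *\<^sub>R q) (x *\<^sub>R p + y *\<^sub>R q)
     = x^4 * T p p p p + 4 * x^3 * y * T p p p q + 6 * x^2 * y^2 * T p p q q
       + 4 * x * y^3 * T p q q q + y^4 * T q q q q" for x y p q
  proof -
    show ?thesis by (simp add: Ts perm) (simp add: power2_eq_square power3_eq_cube power4_eq_xxxx algebra_simps)
  qed
  have polar: "12 * T u u v v = T (u+v) (u+v) (u+v) (u+v) + T (u-v) (u-v) (u-v) (u-v) - 2 * T u u u u - 2 * T v v v v" for u v
  proof -
    have "T (u+v) (u+v) (u+v) (u+v) = T (1 *\<^sub>R u + 1 *\<^sub>R v) (1 *\<^sub>R u + 1 *\<^sub>R v) (1 *\<^sub>R u + 1 *\<^sub>R v) (1 *\<^sub>R u + 1 *\<^sub>R v)" by simp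
    moreover have "T (u-v) (u-v) (u-v) (u-v) = T (1 *\<^sub>R u + (-1) *\<^sub>R v) (1 *\<^sub>R u + (-1) *\<^sub>R v) (1 *\<^sub>R u + (-1) *\<^sub>R v) (1 *\<^sub>R u + (-1) *\<^sub>R v)" by simp
    ultimately show ?thesis unfolding E4 by simp
  qed
  have unit: "\<bar>T u1 u1 v1 v1\<bar> \<le> M" if u1: "B u1 u1 = 1" and v1: "B v1 v1 = 1" for u1 v1
  proof -
    define p where "p = (1/2) *\<^sub>R (u1 + v1)"
    define q where "q = (1/2) *\<^sub>R (v1 - u1)"
    have half: "(1/2) *\<^sub>R x + (1/2) *\<^sub>R x = x" for x :: 'a by (simp flip: scaleR_add_left)
    have u1e: "u1 = p - q" and v1e: "v1 = p + q" unfolding p_def q_def by (simp_all add: algebra_simps half)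
    have pq: "B p q = 0" unfolding p_def q_def using u1 v1 by (simp add: B_simps B_sym[of v1 u1])
    define P where "P = B p p"
    define Q where "Q = B q q"
    have PQ1: "P + Q = 1" unfolding P_def Q_def p_def q_def using u1 v1
      by (simp add: B_simps B_sym[of v1 u1] algebra_simps)
    have P0: "P \<ge> 0" and Q0: "Q \<ge> 0" unfolding P_def Q_def by (simp_all add: B_nonneg)
    have G: "12 * T u1 u1 v1 v1 = 12 * T p p p p - 24 * T p p q q + 12 * T q q q q"
    proof -
      have "u1 + v1 = 2 *\<^sub>R p" "u1 - v1 = (-2) *\<^sub>R q" unfolding p_def q_def by (simp_all add: algebra_simps)
      moreover have "u1 = 1 *\<^sub>R p + (-1) *\<^sub>R q" "v1 = 1 *\<^sub>R p + 1 *\<^sub>R q" using u1e v1e by simp_all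
      ultimately show ?thesis unfolding polar by (simp add: Ts E4 perm)
    qed
    have bp: "\<bar>T p p p p\<bar> \<le> M * P^2" using bnd[of p] unfolding P_def .
    have bq: "\<bar>T q q q q\<bar> \<le> M * Q^2" using bnd[of q] unfolding Q_def .
    show ?thesis
    proof (cases "P = 0 \<or> Q = 0")
      case True
      then have "p = 0 \<or> q = 0" unfolding P_def Q_def using B_pos by fastforce
      then have "T u1 u1 v1 v1 = T p p p p + T q q q q" using G by (auto simp: Ts)
      moreover have "M * P^2 + M * Q^2 = M" using True PQ1 by auto
      ultimately show ?thesis using bp bq by linarith
    next
      case False
      then have P: "P > 0" and Q: "Q > 0" using P0 Q0 by auto
      define a where "a = sqrt P"
      define b where "b = sqrt Q"
      have a2: "a^2 = P" and b2: "b^2 = Q" unfolding a_def b_def using P0 Q0 by simp_all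
      have a4: "a^4 = P^2" and b4: "b^4 = Q^2" using a2 b2 by (metis power_mult numeral_Bit0 mult_2 power2_eq_square power_even_eq)+
      define wp where "wp = b *\<^sub>R p + a *\<^sub>R q"
      define wm where "wm = b *\<^sub>R p + (-a) *\<^sub>R q"
      have Bw: "B wp wp = 2 * P * Q" "B wm wm = 2 * P * Q"
        unfolding wp_def wm_def using pq a2 b2
        by (simp_all add: B_simps B_sym[of q p] P_def[symmetric] Q_def[symmetric] power2_eq_square algebra_simps)
      have S: "T wp wp wp wp + T wm wm wm wm = 2 * Q^2 * T p p p p + 12 * P * Q * T p p q q + 2 * P^2 * T q q q q"
        unfolding wp_def wm_def E4 using a2 b2 a4 b4
        by (simp add: power2_eq_square power3_eq_cube power4_eq_xxxx algebra_simps)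
      have bw: "\<bar>T wp wp wp wp + T wm wm wm wm\<bar> \<le> 2 * (M * (2 * P * Q)^2)"
        using bnd[of wp] bnd[of wm] Bw by simp
      have key: "6 * P * Q * T u1 u1 v1 v1 = (6 * P * Q + 2 * Q^2) * T p p p p + (6 * P * Q + 2 * P^2) * T q q q q
          - (T wp wp wp wp + T wm wm wm wm)"
      proof -
        have G': "T u1 u1 v1 v1 = T p p p p - 2 * T p p q q + T q q q q" using G by linarith
        show ?thesis unfolding G' S by (simp add: algebra_simps)
      qed
      have M0: "M \<ge> 0" using bp P by (smt (verit) zero_le_mult_iff zero_less_power)
      have "\<bar>6 * P * Q * T u1 u1 v1 v1\<bar> \<le> (6 * P * Q + 2 * Q^2) * (M * P^2) + (6 * P * Q + 2 * P^2) * (M * Q^2)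
          + 2 * (M * (2 * P * Q)^2)"
      proof -
        have c1: "6 * P * Q + 2 * Q^2 \<ge> 0" "6 * P * Q + 2 * P^2 \<ge> 0" using P Q by auto
        have t1: "\<bar>(6 * P * Q + 2 * Q^2) * T p p p p\<bar> \<le> (6 * P * Q + 2 * Q^2) * (M * P^2)"
          unfolding abs_mult using c1 bp by (simp add: mult_left_mono)
        have t2: "\<bar>(6 * P * Q + 2 * P^2) * T q q q q\<bar> \<le> (6 * P * Q + 2 * P^2) * (M * Q^2)"
          unfolding abs_mult using c1 bq by (simp add: mult_left_mono)
        show ?thesis unfolding key using t1 t2 bw by arith
      qed
      also have "\<dots> = (6 * P * Q) * (M * (P + Q)^2)" by (simp add: power2_eq_square algebra_simps)
      also have "\<dots> = (6 * P * Q) * M" using PQ1 by simp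
      finally have "(6 * P * Q) * \<bar>T u1 u1 v1 v1\<bar> \<le> (6 * P * Q) * M" using P Q by (simp add: abs_mult)
      then show ?thesis using P Q by (simp add: mult_le_cancel_left_pos)
    qed
  qed
  have uuvv: "\<bar>T u u v v\<bar> \<le> M * B u u * B v v" for u v
  proof (cases "u = 0 \<or> v = 0")
    case True
    then show ?thesis by (auto simp: Ts B_simps)
  next
    case False
    define u1 where "u1 = u /\<^sub>R nrm u"
    define v1 where "v1 = v /\<^sub>R nrm v"
    have pu: "nrm u > 0" and pv: "nrm v > 0" using False nrm_pos by auto
    have "T u u v v = nrm u ^ 2 * nrm v ^ 2 * T u1 u1 v1 v1"
      unfolding u1_def v1_def using pu pv by (simp add: Ts power2_eq_square field_simps)
    moreover have "\<bar>T u1 u1 v1 v1\<bar> \<le> M"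
      using unit normalize_unit False unfolding u1_def v1_def by blast
    ultimately show ?thesis using B_nonneg[of u] B_nonneg[of v] nrm_sq[of u] nrm_sq[of v]
      by (simp add: abs_mult mult_left_mono mult.assoc mult.commute[of M])
  qed
  have "\<bar>T a b c c\<bar> \<le> (M * B c c) * nrm a * nrm b"
  proof (rule bilinear_bound[where Q = "\<lambda>a b. T a b c c"])
    show "linear (\<lambda>a. T a b c c)" for b by (rule T_lin)
    show "T a b c c = T b a c c" for a b by (rule T_s12)
    show "\<bar>T h h c c\<bar> \<le> M * B c c * B h h" for h using uuvv[of h c] by (simp add: algebra_simps)
  qed
  then show ?thesis by (simp add: algebra_simps)
qed

end

lemma dderiv_append: "dderiv f (as @ bs) = dderiv (dderiv f bs) as"
  by (induction as) auto

lemma frechet_derivative_cong_open: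
  assumes "open S" "x \<in> S" "\<And>y. y \<in> S \<Longrightarrow> f y = g y"
  shows "frechet_derivative f (at x) = frechet_derivative g (at x)"
proof -
  have "(f has_derivative f') (at x) \<longleftrightarrow> (g has_derivative f') (at x)" for f'
    using has_derivative_transform_within_open[OF _ assms(1,2), of f f' UNIV g]
      has_derivative_transform_within_open[OF _ assms(1,2), of g f' UNIV f] assms(3)
    by auto
  then show ?thesis unfolding frechet_derivative_def by simp
qed

lemma dderiv_cong_open:
  assumes "open S" "\<And>y. y \<in> S \<Longrightarrow> f y = g y" "x \<in> S"
  shows "dderiv f hs x = dderiv g hs x"
  using assms(3)
proof (induction hs arbitrary: x)
  case Nil
  then show ?case using assms(2) by simp
next
  case (Cons h hs)
  have "frechet_derivative (dderiv f hs) (at x) = frechet_derivative (dderiv g hs) (at x)"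
    by (rule frechet_derivative_cong_open[OF assms(1) Cons.prems Cons.IH])
  then show ?case by simp
qed

lemma line_deriv:
  fixes f :: "'a::real_normed_vector \<Rightarrow> real"
  assumes "f differentiable (at (p + s *\<^sub>R v))"
  shows "((\<lambda>s. f (p + s *\<^sub>R v)) has_derivative (\<lambda>d. d * dderiv f [v] (p + s *\<^sub>R v))) (at s within X)"
proof -
  have f: "(f has_derivative frechet_derivative f (at (p + s *\<^sub>R v))) (at (p + s *\<^sub>R v))"
    using assms frechet_derivative_works by blast
  have l: "((\<lambda>s. p + s *\<^sub>R v) has_derivative (\<lambda>d. d *\<^sub>R v)) (at s within X)"
    by (auto intro!: derivative_eq_intros)
  have "((\<lambda>s. f (p + s *\<^sub>R v)) has_derivative (\<lambda>d. frechet_derivative f (at (p + s *\<^sub>R v)) (d *\<^sub>R v))) (at s within X)"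
    by (rule has_derivative_compose[OF l f])
  moreover have "frechet_derivative f (at (p + s *\<^sub>R v)) (d *\<^sub>R v) = d * dderiv f [v] (p + s *\<^sub>R v)" for d
    using linear_scale[OF linear_frechet_derivative[OF assms], of d v] by simp
  ultimately show ?thesis by simp
qed

lemma line_deriv_real:
  fixes f :: "'a::real_normed_vector \<Rightarrow> real"
  assumes "f differentiable (at (p + s *\<^sub>R v))"
  shows "((\<lambda>s. f (p + s *\<^sub>R v)) has_real_derivative (dderiv f [v] (p + s *\<^sub>R v))) (at s within X)"
  using line_deriv[OF assms, of X] unfolding has_field_derivative_def by (simp add: mult.commute[of _ "frechet_derivative f _ v"])

lemma schwarz_mvt:
  fixes g :: "'a::real_normed_vector \<Rightarrow> real"
  assumes t: "t > 0"
    and sub: "\<And>a b. 0 \<le> a \<Longrightarrow> a \<le> t \<Longrightarrow> 0 \<le> b \<Longrightarrow> b \<le> t \<Longrightarrow> x + a *\<^sub>R u + b *\<^sub>R w \<in> S"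
    and dg: "\<And>y. y \<in> S \<Longrightarrow> g differentiable (at y)"
    and du: "\<And>y. y \<in> S \<Longrightarrow> dderiv g [u] differentiable (at y)"
  shows "\<exists>a b. 0 \<le> a \<and> a \<le> t \<and> 0 \<le> b \<and> b \<le> t \<and>
    g (x + t *\<^sub>R u + t *\<^sub>R w) - g (x + t *\<^sub>R u) - g (x + t *\<^sub>R w) + g x
      = t^2 * dderiv g [w,u] (x + a *\<^sub>R u + b *\<^sub>R w)"
proof -
  define f1 where "f1 = (\<lambda>s. g ((x + t *\<^sub>R w) + s *\<^sub>R u) - g (x + s *\<^sub>R u))"
  have "\<exists>s\<in>{0..t}. f1 t - f1 0 = (\<lambda>s d. d * (dderiv g [u] ((x + t *\<^sub>R w) + s *\<^sub>R u) - dderiv g [u] (x + s *\<^sub>R u))) s (t - 0)"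
  proof (rule mvt_very_simple)
    show "0 \<le> t" using t by simp
    fix s assume s: "0 \<le> s" "s \<le> t"
    have in1: "(x + t *\<^sub>R w) + s *\<^sub>R u \<in> S" using sub[of s t] s t
      by (simp add: algebra_simps)
    have in2: "x + s *\<^sub>R u \<in> S" using sub[of s 0] s t by simp
    have "(f1 has_derivative (\<lambda>d. d * dderiv g [u] ((x + t *\<^sub>R w) + s *\<^sub>R u) - d * dderiv g [u] (x + s *\<^sub>R u))) (at s within {0..t})"
      unfolding f1_def
      by (intro has_derivative_diff line_deriv dg in1 in2)
    then show "(f1 has_derivative (\<lambda>d. d * (dderiv g [u] ((x + t *\<^sub>R w) + s *\<^sub>R u) - dderiv g [u] (x + s *\<^sub>R u)))) (at s within {0..t})"
      by (simp add: algebra_simps)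
  qed
  then obtain a where a: "0 \<le> a" "a \<le> t"
    and ea: "f1 t - f1 0 = t * (dderiv g [u] ((x + a *\<^sub>R u) + t *\<^sub>R w) - dderiv g [u] ((x + a *\<^sub>R u) + 0 *\<^sub>R w))"
    by (auto simp: algebra_simps)
  define f2 where "f2 = (\<lambda>r. dderiv g [u] ((x + a *\<^sub>R u) + r *\<^sub>R w))"
  have "\<exists>r\<in>{0..t}. f2 t - f2 0 = (\<lambda>r d. d * dderiv (dderiv g [u]) [w] ((x + a *\<^sub>R u) + r *\<^sub>R w)) r (t - 0)"
  proof (rule mvt_very_simple)
    show "0 \<le> t" using t by simp
    fix r assume r: "0 \<le> r" "r \<le> t"
    have "(x + a *\<^sub>R u) + r *\<^sub>R w \<in> S" using sub[OF a r] by simp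
    then show "(f2 has_derivative (\<lambda>d. d * dderiv (dderiv g [u]) [w] ((x + a *\<^sub>R u) + r *\<^sub>R w))) (at r within {0..t})"
      unfolding f2_def by (intro line_deriv du)
  qed
  then obtain b where b: "0 \<le> b" "b \<le> t"
    and eb: "f2 t - f2 0 = t * dderiv g [w,u] (x + a *\<^sub>R u + b *\<^sub>R w)"
    by auto
  have "g (x + t *\<^sub>R u + t *\<^sub>R w) - g (x + t *\<^sub>R u) - g (x + t *\<^sub>R w) + g x = f1 t - f1 0"
    unfolding f1_def by (simp add: algebra_simps)
  also have "\<dots> = t * (f2 t - f2 0)" unfolding ea f2_def by simp
  also have "\<dots> = t^2 * dderiv g [w,u] (x + a *\<^sub>R u + b *\<^sub>R w)" unfolding eb by (simp add: power2_eq_square)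
  finally show ?thesis using a b by blast
qed

lemma schwarz:
  fixes g :: "'a::real_normed_vector \<Rightarrow> real"
  assumes S: "open S" and x: "x \<in> S"
    and dg: "\<And>y. y \<in> S \<Longrightarrow> g differentiable (at y)"
    and du: "\<And>y. y \<in> S \<Longrightarrow> dderiv g [u] differentiable (at y)"
    and dw: "\<And>y. y \<in> S \<Longrightarrow> dderiv g [w] differentiable (at y)"
    and cu: "continuous_on S (dderiv g [w,u])" and cw: "continuous_on S (dderiv g [u,w])"
  shows "dderiv g [w,u] x = dderiv g [u,w] x"
proof (rule ccontr)
  assume ne: "dderiv g [w,u] x \<noteq> dderiv g [u,w] x"
  define e where "e = \<bar>dderiv g [w,u] x - dderiv g [u,w] x\<bar> / 2"
  have e: "e > 0" using ne unfolding e_def by simp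
  have c1: "isCont (dderiv g [w,u]) x" using cu S x continuous_on_eq_continuous_at by blast
  have c2: "isCont (dderiv g [u,w]) x" using cw S x continuous_on_eq_continuous_at by blast
  obtain d1 where d1: "d1 > 0" "\<And>z. dist z x < d1 \<Longrightarrow> dist (dderiv g [w,u] z) (dderiv g [w,u] x) < e"
    using c1 e unfolding continuous_at_eps_delta by blast
  obtain d2 where d2: "d2 > 0" "\<And>z. dist z x < d2 \<Longrightarrow> dist (dderiv g [u,w] z) (dderiv g [u,w] x) < e"
    using c2 e unfolding continuous_at_eps_delta by blast
  obtain d0 where d0: "d0 > 0" "ball x d0 \<subseteq> S" using S x open_contains_ball by blast
  define d where "d = min d0 (min d1 d2)"
  have d: "d > 0" unfolding d_def using d0 d1 d2 by simp
  define t where "t = d / (2 * (norm u + norm w + 1))"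
  have t: "t > 0" unfolding t_def using d by (simp add: add_nonneg_pos)
  have close: "dist (x + a *\<^sub>R u + b *\<^sub>R w) x < d" if "0 \<le> a" "a \<le> t" "0 \<le> b" "b \<le> t" for a b
  proof -
    have "dist (x + a *\<^sub>R u + b *\<^sub>R w) x = norm (a *\<^sub>R u + b *\<^sub>R w)" by (simp add: dist_norm)
    also have "\<dots> \<le> a * norm u + b * norm w" using that by (smt (verit) norm_scaleR norm_triangle_ineq abs_of_nonneg)
    also have "\<dots> \<le> t * norm u + t * norm w" using that by (intro add_mono mult_right_mono) auto
    also have "\<dots> = t * (norm u + norm w)" by (simp add: algebra_simps)
    also have "\<dots> < t * (2 * (norm u + norm w + 1))" using t
      by (intro mult_strict_left_mono) (auto simp: add_nonneg_nonneg add_nonneg_pos)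
    also have "\<dots> = d" unfolding t_def
      by (smt (verit) nonzero_eq_divide_eq norm_ge_zero)
    finally show ?thesis .
  qed
  have sub: "x + a *\<^sub>R u + b *\<^sub>R w \<in> S" if "0 \<le> a" "a \<le> t" "0 \<le> b" "b \<le> t" for a b
    using close[OF that] d0(2) unfolding d_def by (auto simp: dist_commute)
  have sub': "x + a *\<^sub>R w + b *\<^sub>R u \<in> S" if "0 \<le> a" "a \<le> t" "0 \<le> b" "b \<le> t" for a b
    using sub[of b a] that by (simp add: algebra_simps)
  obtain a1 b1 where ab1: "0 \<le> a1" "a1 \<le> t" "0 \<le> b1" "b1 \<le> t"
    and E1: "g (x + t *\<^sub>R u + t *\<^sub>R w) - g (x + t *\<^sub>R u) - g (x + t *\<^sub>R w) + g x
      = t^2 * dderiv g [w,u] (x + a1 *\<^sub>R u + b1 *\<^sub>R w)"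
    using schwarz_mvt[OF t sub dg du] by blast
  obtain a2 b2 where ab2: "0 \<le> a2" "a2 \<le> t" "0 \<le> b2" "b2 \<le> t"
    and E2: "g (x + t *\<^sub>R w + t *\<^sub>R u) - g (x + t *\<^sub>R w) - g (x + t *\<^sub>R u) + g x
      = t^2 * dderiv g [u,w] (x + a2 *\<^sub>R w + b2 *\<^sub>R u)"
    using schwarz_mvt[OF t sub' dg dw] by blast
  have "t^2 * dderiv g [w,u] (x + a1 *\<^sub>R u + b1 *\<^sub>R w) = t^2 * dderiv g [u,w] (x + a2 *\<^sub>R w + b2 *\<^sub>R u)"
    using E1 E2 by (simp add: algebra_simps)
  then have eq: "dderiv g [w,u] (x + a1 *\<^sub>R u + b1 *\<^sub>R w) = dderiv g [u,w] (x + a2 *\<^sub>R w + b2 *\<^sub>R u)"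
    using t by simp
  have "dist (x + a1 *\<^sub>R u + b1 *\<^sub>R w) x < d1" using close[OF ab1] unfolding d_def by simp
  then have z1: "dist (dderiv g [w,u] (x + a1 *\<^sub>R u + b1 *\<^sub>R w)) (dderiv g [w,u] x) < e" by (rule d1(2))
  have "dist (x + a2 *\<^sub>R w + b2 *\<^sub>R u) x < d2" using close[OF ab2(3,4,1,2)] unfolding d_def
    by (simp add: algebra_simps)
  then have z2: "dist (dderiv g [u,w] (x + a2 *\<^sub>R w + b2 *\<^sub>R u)) (dderiv g [u,w] x) < e" by (rule d2(2))
  have gen: "\<And>A B C D :: real. \<bar>A - C\<bar> < \<bar>C - D\<bar> / 2 \<Longrightarrow> \<bar>B - D\<bar> < \<bar>C - D\<bar> / 2 \<Longrightarrow> A = B \<Longrightarrow> False"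
    by (simp add: abs_if split: if_splits)
  show False using gen[OF z1[unfolded e_def dist_real_def] z2[unfolded e_def dist_real_def] eq] .
qed

lemma dderiv_append': "dderiv (dderiv f bs) as = dderiv f (as @ bs)"
  by (simp add: dderiv_append)

locale hsc =
  fixes K :: "(real^'n) set" and \<phi> :: "real^'n \<Rightarrow> real"
  assumes K_open: "open K" and K_convex: "convex K" and hsc: "hsc_barrier K \<phi>"
begin

lemma Ck: "C_k_on 4 K \<phi>" using hsc unfolding hsc_barrier_def by blast

lemma diff: "length hs < 4 \<Longrightarrow> x \<in> K \<Longrightarrow> dderiv \<phi> hs differentiable (at x)"
  using Ck unfolding C_k_on_def by blast

lemma cont: "length hs \<le> 4 \<Longrightarrow> continuous_on K (dderiv \<phi> hs)"
proof (cases "length hs = 4")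
  case True then show ?thesis using Ck unfolding C_k_on_def by blast
next
  case False
  assume "length hs \<le> 4"
  with False have "length hs < 4" by simp
  then show ?thesis
    by (intro continuous_at_imp_continuous_on ballI differentiable_imp_continuous_within diff)
qed

lemma hasd: "length hs < 4 \<Longrightarrow> x \<in> K \<Longrightarrow> (dderiv \<phi> hs has_derivative (\<lambda>h. dderiv \<phi> (h#hs) x)) (at x)"
proof -
  assume a: "length hs < 4" "x \<in> K"
  have "(dderiv \<phi> hs has_derivative frechet_derivative (dderiv \<phi> hs) (at x)) (at x)"
    using diff[OF a] frechet_derivative_works by blast
  then show ?thesis by simp
qed

lemma lin: "length hs < 4 \<Longrightarrow> x \<in> K \<Longrightarrow> linear (\<lambda>h. dderiv \<phi> (h#hs) x)"
  using linear_frechet_derivative[OF diff[of hs x]] by simp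

lemma swap0:
  assumes "length post \<le> 2" "y \<in> K"
  shows "dderiv \<phi> (a # b # post) y = dderiv \<phi> (b # a # post) y"
proof -
  have "dderiv (dderiv \<phi> post) [a, b] y = dderiv (dderiv \<phi> post) [b, a] y"
  proof (rule schwarz[OF K_open assms(2)])
    show "dderiv \<phi> post differentiable (at z)" if "z \<in> K" for z using diff that assms by simp
    show "dderiv (dderiv \<phi> post) [b] differentiable (at z)" if "z \<in> K" for z 
      unfolding dderiv_append' using diff[of "b # post" z] that assms by simp
    show "dderiv (dderiv \<phi> post) [a] differentiable (at z)" if "z \<in> K" for z 
      unfolding dderiv_append' using diff[of "a # post" z] that assms by simp
    show "continuous_on K (dderiv (dderiv \<phi> post) [a, b])"
      unfolding dderiv_append' using cont[of "a # b # post"] assms by simp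
    show "continuous_on K (dderiv (dderiv \<phi> post) [b, a])"
      unfolding dderiv_append' using cont[of "b # a # post"] assms by simp
  qed
  then show ?thesis unfolding dderiv_append' by simp
qed

lemma swap:
  assumes "length pre + length post \<le> 2" "x \<in> K"
  shows "dderiv \<phi> (pre @ a # b # post) x = dderiv \<phi> (pre @ b # a # post) x"
proof -
  have "dderiv (dderiv \<phi> (a # b # post)) pre x = dderiv (dderiv \<phi> (b # a # post)) pre x"
    by (rule dderiv_cong_open[OF K_open _ assms(2)]) (use swap0 assms in simp)
  then show ?thesis unfolding dderiv_append' .
qed

end

lemma lin_expand:
  fixes F :: "real^'n \<Rightarrow> real"
  assumes "linear F"
  shows "F h = (\<Sum>i\<in>UNIV. h$i * F (axis i 1))"
proof -
  have "F h = F (\<Sum>i\<in>UNIV. (h$i) *\<^sub>R axis i 1)"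
    using basis_expansion[of h] by (simp add: scalar_mult_eq_scaleR)
  also have "\<dots> = (\<Sum>i\<in>UNIV. h$i * F (axis i 1))"
    by (subst linear_sum[OF assms]) (simp add: linear_scale[OF assms])
  finally show ?thesis .
qed

lemma vec_dot:
  fixes F :: "real^'n \<Rightarrow> real"
  assumes "linear F"
  shows "(\<chi> i. F (axis i 1)) \<bullet> q = F q"
  unfolding lin_expand[OF assms, of q] inner_vec_def by (simp add: mult.commute)

declare dderiv.simps(2)[simp del]

context hsc begin

lemma D2_lin: "z \<in> K \<Longrightarrow> linear (\<lambda>a. dderiv \<phi> [a,b] z)"
  using lin[of "[b]" z] by simp

lemma D2_sym: "z \<in> K \<Longrightarrow> dderiv \<phi> [a,b] z = dderiv \<phi> [b,a] z"
  using swap[of "[]" "[]" z a b] by simp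

lemma D2_lin2: "z \<in> K \<Longrightarrow> linear (\<lambda>b. dderiv \<phi> [a,b] z)"
  using D2_lin[of z a] by (subst D2_sym) auto

lemma hess_mult: "z \<in> K \<Longrightarrow> hess \<phi> z *v h = (\<chi> i. dderiv \<phi> [axis i 1, h] z)"
  unfolding hess_def matrix_vector_mult_def vec_eq_iff
  by (simp add: lin_expand[OF D2_lin2, of z _ h] mult.commute)

lemma quad_hess: "z \<in> K \<Longrightarrow> h \<bullet> (hess \<phi> z *v h) = dderiv \<phi> [h,h] z"
  unfolding hess_mult by (subst inner_commute) (rule vec_dot[OF D2_lin])

lemma lnorm_hess: "z \<in> K \<Longrightarrow> lnorm (hess \<phi> z) h = sqrt (dderiv \<phi> [h,h] z)"
  unfolding lnorm_def quad_hess ..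

lemma psd: assumes z: "z \<in> K" shows "dderiv \<phi> [h,h] z \<ge> 0"
proof (rule ccontr)
  assume neg: "\<not> dderiv \<phi> [h,h] z \<ge> 0"
  define F where "F = (\<lambda>s. dderiv \<phi> [h] (z + s *\<^sub>R h))"
  define f where "f = (\<lambda>s. \<phi> (z + s *\<^sub>R h))"
  obtain d where d: "d > 0" "ball z d \<subseteq> K" using K_open z open_contains_ball by blast
  define c where "c = d / (norm h + 1)"
  have c: "c > 0" unfolding c_def using d by (simp add: add_nonneg_pos)
  have inK: "z + q *\<^sub>R h \<in> K" if "\<bar>q\<bar> < c" for q
  proof -
    have "norm (q *\<^sub>R h) = \<bar>q\<bar> * norm h" by simp
    also have "\<dots> \<le> c * norm h" using that by (intro mult_right_mono) auto
    also have "\<dots> < d" unfolding c_def using d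
      by (smt (verit) divide_less_eq mult.commute mult_left_less_imp_less norm_ge_zero nonzero_mult_div_cancel_left times_divide_eq_right)
    finally show ?thesis using d(2) by (auto simp: dist_norm)
  qed
  have fd: "(f has_real_derivative F q) (at q)" if "\<bar>q\<bar> < c" for q
    unfolding f_def F_def by (rule line_deriv_real) (use diff[of "[]"] inK[OF that] in auto)
  have Fd: "(F has_real_derivative dderiv \<phi> [h,h] z) (at 0)"
  proof -
    have "(F has_real_derivative dderiv (dderiv \<phi> [h]) [h] (z + 0 *\<^sub>R h)) (at 0)"
      unfolding F_def by (rule line_deriv_real) (use diff[of "[h]" z] z in simp)
    then show ?thesis unfolding dderiv_append' by simp
  qed
  obtain d1 where d1: "d1 > 0" "\<And>s. s > 0 \<Longrightarrow> s < d1 \<Longrightarrow> F (0 + s) < F 0"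
    using DERIV_neg_dec_right[OF Fd] neg by force
  obtain d2 where d2: "d2 > 0" "\<And>s. s > 0 \<Longrightarrow> s < d2 \<Longrightarrow> F 0 < F (0 - s)"
    using DERIV_neg_dec_left[OF Fd] neg by force
  define s where "s = min c (min d1 d2) / 2"
  have s: "0 < s" "s < c" "s < d1" "s < d2" unfolding s_def using c d1 d2 by auto
  have cont: "continuous_on {a..b} f" if "-s \<le> a" "b \<le> s" for a b
  proof (intro continuous_at_imp_continuous_on ballI)
    fix q assume "q \<in> {a..b}"
    then have "\<bar>q\<bar> < c" using that s by auto
    then show "isCont f q" using fd DERIV_isCont by blast
  qed
  obtain l1 x1 where x1: "0 < x1" "x1 < s" "DERIV f x1 :> l1" "f s - f 0 = (s - 0) * l1"
    using MVT[of 0 s f] s cont[of 0 s] fd real_differentiable_def by (smt (verit, best))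
  have l1: "l1 = F x1" using DERIV_unique[OF x1(3) fd] x1 s by auto
  obtain l2 x2 where x2: "-s < x2" "x2 < 0" "DERIV f x2 :> l2" "f 0 - f (-s) = (0 - (-s)) * l2"
    using MVT[of "-s" 0 f] s cont[of "-s" 0] fd real_differentiable_def by (smt (verit, best))
  have l2: "l2 = F x2" using DERIV_unique[OF x2(3) fd] x2 s by auto
  have "F x1 < F 0" using d1(2)[of x1] x1 s by simp
  moreover have "F 0 < F x2" using d2(2)[of "-x2"] x2 s by simp
  ultimately have lt: "f s - f 0 < f 0 - f (-s)"
    using x1(4) x2(4) l1 l2 s(1) by (simp add: mult_strict_left_mono)
  have "\<phi> ((1 - 1/2) *\<^sub>R (z + (-s) *\<^sub>R h) + (1/2) *\<^sub>R (z + s *\<^sub>R h)) \<le> (1 - 1/2) * \<phi> (z + (-s) *\<^sub>R h) + (1/2) * \<phi> (z + s *\<^sub>R h)"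
    using hsc unfolding hsc_barrier_def
    by (intro convex_onD) (use inK[of "-s"] inK[of s] s in auto)
  moreover have "(1 - 1/2) *\<^sub>R (z + (-s) *\<^sub>R h) + (1/2) *\<^sub>R (z + s *\<^sub>R h) = z"
    by (simp add: algebra_simps flip: scaleR_add_left)
  ultimately have "f 0 \<le> (f (-s) + f s) / 2" unfolding f_def by simp
  then show False using lt by simp
qed

end

lemma powr_three_halves: "(x::real) \<ge> 0 \<Longrightarrow> x powr (3/2) = sqrt x ^ 3"
proof -
  assume x: "x \<ge> 0"
  show ?thesis
  proof (cases "x = 0")
    case True then show ?thesis by simp
  next
    case False
    have "x powr (3/2) = x powr (1 + 1/2)" by simp
    also have "\<dots> = x powr 1 * x powr (1/2)" by (rule powr_add)
    also have "\<dots> = x * sqrt x" using False x by (simp add: powr_half_sqrt)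
    also have "\<dots> = sqrt x ^ 2 * sqrt x" using x by simp
    also have "\<dots> = sqrt x ^ 3" by (simp add: power3_eq_cube power2_eq_square)
    finally show ?thesis .
  qed
qed

context hsc begin

lemma pd: assumes z: "z \<in> K" and h: "h \<noteq> 0" shows "dderiv \<phi> [h,h] z > 0"
proof (rule ccontr)
  assume "\<not> dderiv \<phi> [h,h] z > 0"
  then have h0: "dderiv \<phi> [h,h] z = 0" using psd[OF z, of h] by simp
  note L = linear_add[OF D2_lin[OF z]] linear_add[OF D2_lin2[OF z]]
    linear_scale[OF D2_lin[OF z]] linear_scale[OF D2_lin2[OF z]]
  have k0: "dderiv \<phi> [k,h] z = 0" for k
  proof (rule ccontr)
    define a where "a = dderiv \<phi> [k,h] z"
    define b where "b = dderiv \<phi> [k,k] z"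
    assume "dderiv \<phi> [k,h] z \<noteq> 0"
    then have a: "a \<noteq> 0" unfolding a_def .
    have b: "b \<ge> 0" unfolding b_def using psd[OF z] .
    define t where "t = - a / (b + 1)"
    have "dderiv \<phi> [h + t *\<^sub>R k, h + t *\<^sub>R k] z = dderiv \<phi> [h,h] z + 2 * t * a + t^2 * b"
      unfolding a_def b_def by (simp add: L D2_sym[OF z, of h k] power2_eq_square algebra_simps)
    also have "\<dots> < 0"
    proof -
      define e where "e = b + 1"
      have e: "e > 0" unfolding e_def using b by simp
      have et: "e * t = - a" unfolding t_def e_def using b by simp
      have "e^2 * (2 * t * a + t^2 * b) = 2 * e * (e * t) * a + (e * t)^2 * b"
        by (simp add: power2_eq_square algebra_simps)
      also have "\<dots> = - (a^2 * (b + 2))" unfolding et by (simp add: e_def power2_eq_square algebra_simps)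
      also have "\<dots> < 0" using a b by (simp add: add_nonneg_pos)
      finally have "e^2 * (2 * t * a + t^2 * b) < 0" .
      then show ?thesis unfolding h0 using e by (simp add: mult_less_0_iff)
    qed
    finally show False using psd[OF z, of "h + t *\<^sub>R k"] by simp
  qed
  have "hess \<phi> z *v h = 0" unfolding hess_mult[OF z] using k0 by (simp add: vec_eq_iff)
  moreover obtain A' where "A' ** hess \<phi> z = mat 1"
    using hsc z unfolding hsc_barrier_def invertible_def by blast
  ultimately have "h = 0" by (metis matrix_vector_mul_assoc matrix_vector_mul_lid matrix_vector_mult_0_right)
  then show False using h by simp
qed

lemma ipf: assumes z: "z \<in> K" shows "ipform (\<lambda>a b. dderiv \<phi> [a,b] z)"
proof (rule ipform.intro)
  show "linear (\<lambda>a. dderiv \<phi> [a,b] z)" for b by (rule D2_lin[OF z])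
  show "dderiv \<phi> [a,b] z = dderiv \<phi> [b,a] z" for a b by (rule D2_sym[OF z])
  show "dderiv \<phi> [a,a] z > 0" if "a \<noteq> 0" for a by (rule pd[OF z that])
qed

lemma D3_bound:
  assumes z: "z \<in> K"
  shows "\<bar>dderiv \<phi> [a,b,c] z\<bar> \<le> 2 * sqrt (dderiv \<phi> [a,a] z) * sqrt (dderiv \<phi> [b,b] z) * sqrt (dderiv \<phi> [c,c] z)"
proof -
  have "\<bar>dderiv \<phi> [a,b,c] z\<bar> \<le> 2 * ipform.nrm (\<lambda>a b. dderiv \<phi> [a,b] z) a * ipform.nrm (\<lambda>a b. dderiv \<phi> [a,b] z) b * ipform.nrm (\<lambda>a b. dderiv \<phi> [a,b] z) c"
  proof (rule ipform.tri_bound[OF ipf[OF z], where T = "\<lambda>a b c. dderiv \<phi> [a,b,c] z"])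
    show "linear (\<lambda>a. dderiv \<phi> [a,b,c] z)" for b c using lin[of "[b,c]" z] z by simp
    show "dderiv \<phi> [a,b,c] z = dderiv \<phi> [b,a,c] z" for a b c using swap[of "[]" "[c]" z a b] z by simp
    show "dderiv \<phi> [a,b,c] z = dderiv \<phi> [a,c,b] z" for a b c using swap[of "[a]" "[]" z b c] z by simp
    show "\<bar>dderiv \<phi> [h,h,h] z\<bar> \<le> 2 * ipform.nrm (\<lambda>a b. dderiv \<phi> [a,b] z) h ^ 3" for h
    proof -
      have "\<bar>dderiv \<phi> [h,h,h] z\<bar> \<le> 2 * dderiv \<phi> [h,h] z powr (3/2)"
        using hsc z unfolding hsc_barrier_def by blast
      then show ?thesis unfolding ipform.nrm_def[OF ipf[OF z]] powr_three_halves[OF psd[OF z]] .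
    qed
  qed
  then show ?thesis unfolding ipform.nrm_def[OF ipf[OF z]] .
qed

lemma D4_bound:
  assumes z: "z \<in> K"
  shows "\<bar>dderiv \<phi> [a,b,c,c] z\<bar> \<le> 6 * sqrt (dderiv \<phi> [a,a] z) * sqrt (dderiv \<phi> [b,b] z) * dderiv \<phi> [c,c] z"
proof -
  have "\<bar>dderiv \<phi> [a,b,c,c] z\<bar> \<le> 6 * ipform.nrm (\<lambda>a b. dderiv \<phi> [a,b] z) a * ipform.nrm (\<lambda>a b. dderiv \<phi> [a,b] z) b * dderiv \<phi> [c,c] z"
  proof (rule ipform.quad_bound[OF ipf[OF z], where T = "\<lambda>a b c d. dderiv \<phi> [a,b,c,d] z"])
    show "linear (\<lambda>a. dderiv \<phi> [a,b,c,d] z)" for b c d using lin[of "[b,c,d]" z] z by simp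
    show "dderiv \<phi> [a,b,c,d] z = dderiv \<phi> [b,a,c,d] z" for a b c d using swap[of "[]" "[c,d]" z a b] z by simp
    show "dderiv \<phi> [a,b,c,d] z = dderiv \<phi> [a,c,b,d] z" for a b c d using swap[of "[a]" "[d]" z b c] z by simp
    show "dderiv \<phi> [a,b,c,d] z = dderiv \<phi> [a,b,d,c] z" for a b c d using swap[of "[a,b]" "[]" z c d] z by simp
    show "\<bar>dderiv \<phi> [h,h,h,h] z\<bar> \<le> 6 * (dderiv \<phi> [h,h] z)^2" for h
      using hsc z unfolding hsc_barrier_def by simp
  qed
  then show ?thesis unfolding ipform.nrm_def[OF ipf[OF z]] .
qed

end

context hsc begin

lemma seg_in: assumes "x \<in> K" "y \<in> K" "0 \<le> t" "t \<le> 1" shows "x + t *\<^sub>R (y - x) \<in> K"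
proof -
  have "x + t *\<^sub>R (y - x) = (1 - t) *\<^sub>R x + t *\<^sub>R y" by (simp add: algebra_simps)
  then show ?thesis using K_convex assms unfolding convex_alt by (metis convexD_alt K_convex)
qed

lemma seg_deriv:
  assumes "length hs < 4" "x + t *\<^sub>R h \<in> K"
  shows "((\<lambda>t. dderiv \<phi> hs (x + t *\<^sub>R h)) has_real_derivative dderiv \<phi> (h # hs) (x + t *\<^sub>R h)) (at t)"
proof -
  have "((\<lambda>t. dderiv \<phi> hs (x + t *\<^sub>R h)) has_real_derivative dderiv (dderiv \<phi> hs) [h] (x + t *\<^sub>R h)) (at t)"
    by (rule line_deriv_real) (use diff assms in blast)
  then show ?thesis unfolding dderiv_append' by simp
qed

lemma D0: "z \<in> K \<Longrightarrow> dderiv \<phi> [0,0] z = 0"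
  using linear_0[OF D2_lin] by blast

lemma sigma_bound:
  assumes x: "x \<in> K" and y: "y \<in> K" and r1: "sqrt (dderiv \<phi> [y - x, y - x] x) < 1"
    and t: "0 \<le> t" "t \<le> 1"
  shows "sqrt (dderiv \<phi> [y - x, y - x] (x + t *\<^sub>R (y - x))) \<le> sqrt (dderiv \<phi> [y - x, y - x] x) / (1 - t * sqrt (dderiv \<phi> [y - x, y - x] x))"
proof -
  define h where "h = y - x"
  define r where "r = sqrt (dderiv \<phi> [h, h] x)"
  define \<sigma> where "\<sigma> = (\<lambda>s. dderiv \<phi> [h,h] (x + s *\<^sub>R h))"
  define \<sigma>' where "\<sigma>' = (\<lambda>s. dderiv \<phi> [h,h,h] (x + s *\<^sub>R h))"
  have r0: "r \<ge> 0" unfolding r_def using psd[OF x] by simp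
  have r1': "r < 1" using r1 unfolding r_def h_def .
  have "t * r \<le> 1 * r" using t r0 by (intro mult_right_mono) auto
  then have tr: "t * r < 1" using r1' by simp
  have inK: "x + s *\<^sub>R h \<in> K" if "0 \<le> s" "s \<le> 1" for s
    unfolding h_def using seg_in[OF x y that] .
  show ?thesis
  proof (cases "h = 0")
    case True
    then show ?thesis using D0 x inK[OF t] unfolding h_def by simp
  next
    case False
    have pos: "\<sigma> s > 0" if "0 \<le> s" "s \<le> 1" for s unfolding \<sigma>_def using pd[OF inK[OF that] False] .
    have rpos: "r > 0" using pos[of 0] unfolding r_def \<sigma>_def by simp
    define F where "F = (\<lambda>s. inverse (sqrt (\<sigma> s)) + s)"
    have "F 0 \<le> F t"
    proof (rule DERIV_nonneg_imp_nondecreasing[OF t(1)])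
      fix s assume s: "0 \<le> s" "s \<le> t"
      then have s1: "s \<le> 1" using t by simp
      have ps: "\<sigma> s > 0" using pos s s1 by simp
      have ds: "(\<sigma> has_real_derivative \<sigma>' s) (at s)" unfolding \<sigma>_def \<sigma>'_def
        by (rule seg_deriv) (use inK s s1 in auto)
      have dsq: "((\<lambda>s. sqrt (\<sigma> s)) has_real_derivative inverse (sqrt (\<sigma> s)) / 2 * \<sigma>' s) (at s)"
        by (rule DERIV_chain2[OF DERIV_real_sqrt[OF ps] ds])
      have "(F has_real_derivative (- (inverse (sqrt (\<sigma> s)) * (inverse (sqrt (\<sigma> s)) / 2 * \<sigma>' s) * inverse (sqrt (\<sigma> s))) + 1)) (at s)"
      proof -
        have dinv: "((\<lambda>s. inverse (sqrt (\<sigma> s))) has_real_derivative - (inverse (sqrt (\<sigma> s)) * (inverse (sqrt (\<sigma> s)) / 2 * \<sigma>' s) * inverse (sqrt (\<sigma> s)))) (at s)"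
          by (rule DERIV_inverse'[OF dsq]) (use ps in simp)
        show ?thesis unfolding F_def by (rule DERIV_add[OF dinv DERIV_ident])
      qed
      moreover have "- (inverse (sqrt (\<sigma> s)) * (inverse (sqrt (\<sigma> s)) / 2 * \<sigma>' s) * inverse (sqrt (\<sigma> s))) + 1 \<ge> 0"
      proof -
        have b3: "\<bar>\<sigma>' s\<bar> \<le> 2 * sqrt (\<sigma> s) * sqrt (\<sigma> s) * sqrt (\<sigma> s)"
          unfolding \<sigma>'_def \<sigma>_def using D3_bound[OF inK[OF s(1) s1], of h h h] by simp
        have sq: "(sqrt (\<sigma> s))\<^sup>2 = \<sigma> s" using ps by simp
        have "inverse (sqrt (\<sigma> s)) * (inverse (sqrt (\<sigma> s)) / 2 * \<sigma>' s) * inverse (sqrt (\<sigma> s)) = \<sigma>' s / (2 * sqrt (\<sigma> s) * sqrt (\<sigma> s) * sqrt (\<sigma> s))"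
          using ps by (simp add: field_simps)
        also have "\<dots> \<le> 1" using b3 ps by (simp add: divide_le_eq abs_le_iff)
        finally show ?thesis by simp
      qed
      ultimately show "\<exists>y. (F has_real_derivative y) (at s) \<and> 0 \<le> y" by blast
    qed
    then have "inverse r \<le> inverse (sqrt (\<sigma> t)) + t" unfolding F_def r_def \<sigma>_def by simp
    moreover have "sqrt (\<sigma> t) > 0" using pos[OF t] by simp
    ultimately have "sqrt (\<sigma> t) \<le> r / (1 - t * r)"
      using rpos tr by (simp add: field_simps)
    then show ?thesis unfolding \<sigma>_def r_def h_def .
  qed
qed

lemma psi_bound:
  assumes x: "x \<in> K" and y: "y \<in> K" and r1: "sqrt (dderiv \<phi> [y - x, y - x] x) < 1"
    and t: "0 \<le> t" "t \<le> 1"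
  shows "dderiv \<phi> [u,u] (x + t *\<^sub>R (y - x)) * (1 - t * sqrt (dderiv \<phi> [y - x, y - x] x))^2 \<le> dderiv \<phi> [u,u] x"
proof -
  define h where "h = y - x"
  define r where "r = sqrt (dderiv \<phi> [h, h] x)"
  define \<psi> where "\<psi> = (\<lambda>s. dderiv \<phi> [u,u] (x + s *\<^sub>R h))"
  define \<psi>' where "\<psi>' = (\<lambda>s. dderiv \<phi> [h,u,u] (x + s *\<^sub>R h))"
  have r0: "r \<ge> 0" unfolding r_def using psd[OF x] by simp
  have r1': "r < 1" using r1 unfolding r_def h_def .
  have inK: "x + s *\<^sub>R h \<in> K" if "0 \<le> s" "s \<le> 1" for s
    unfolding h_def using seg_in[OF x y that] .
  define G where "G = (\<lambda>s. \<psi> s * (1 - s * r)^2)"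
  have "G t \<le> G 0"
  proof (rule DERIV_nonpos_imp_nonincreasing[OF t(1)])
    fix s assume s: "0 \<le> s" "s \<le> t"
    then have s1: "s \<le> 1" using t by simp
    have "s * r \<le> 1 * r" using s s1 r0 by (intro mult_right_mono) auto
    then have sr: "1 - s * r > 0" using r1' by simp
    have dp: "(\<psi> has_real_derivative \<psi>' s) (at s)" unfolding \<psi>_def \<psi>'_def
      by (rule seg_deriv) (use inK s s1 in auto)
    have dq: "((\<lambda>s. (1 - s * r)^2) has_real_derivative (2 * (1 - s * r) * (- r))) (at s)"
      by (auto intro!: derivative_eq_intros)
    have dG: "(G has_real_derivative (\<psi>' s * (1 - s * r)^2 + (2 * (1 - s * r) * (- r)) * \<psi> s)) (at s)"
      unfolding G_def by (rule DERIV_mult[OF dp dq])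
    have psi0: "\<psi> s \<ge> 0" unfolding \<psi>_def using psd[OF inK[OF s(1) s1]] .
    have b3: "\<psi>' s \<le> 2 * sqrt (dderiv \<phi> [h,h] (x + s *\<^sub>R h)) * \<psi> s"
      using D3_bound[OF inK[OF s(1) s1], of h u u] psi0 unfolding \<psi>'_def \<psi>_def
      by (simp add: mult.assoc)
    have sb: "sqrt (dderiv \<phi> [h,h] (x + s *\<^sub>R h)) \<le> r / (1 - s * r)"
      using sigma_bound[OF x y r1 s(1) s1] unfolding h_def r_def .
    have "\<psi>' s * (1 - s * r)^2 \<le> 2 * sqrt (dderiv \<phi> [h,h] (x + s *\<^sub>R h)) * \<psi> s * (1 - s * r)^2"
      using b3 by (intro mult_right_mono) auto
    also have "\<dots> \<le> 2 * (r / (1 - s * r)) * \<psi> s * (1 - s * r)^2"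
      using sb psi0 by (intro mult_right_mono) auto
    also have "\<dots> = 2 * r * \<psi> s * (1 - s * r)" using sr by (simp add: power2_eq_square field_simps)
    finally have "\<psi>' s * (1 - s * r)^2 + (2 * (1 - s * r) * (- r)) * \<psi> s \<le> 0" by (simp add: algebra_simps)
    then show "\<exists>y. (G has_real_derivative y) (at s) \<and> y \<le> 0" using dG by blast
  qed
  then show ?thesis unfolding G_def \<psi>_def r_def h_def by simp
qed

lemma aux_deriv: "(c::real) \<noteq> 0 \<Longrightarrow> 2 * A * (- (inverse (c^3) * (3 * c^2 * (- r)) * inverse (c^3))) = 6 * r * A / c^4"
  by (simp add: field_simps power2_eq_square power3_eq_cube power4_eq_xxxx)

lemma chi_bound:
  assumes x: "x \<in> K" and y: "y \<in> K" and r1: "sqrt (dderiv \<phi> [y - x, y - x] x) < 1"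
  shows "\<bar>dderiv \<phi> [q,v,v] x - dderiv \<phi> [q,v,v] y\<bar> \<le>
    6 / (1 - sqrt (dderiv \<phi> [y - x, y - x] x))^3 * (sqrt (dderiv \<phi> [v,v] x))^2 * sqrt (dderiv \<phi> [y - x, y - x] x)
     * sqrt (dderiv \<phi> [q,q] x)"
proof -
  define h where "h = y - x"
  define r where "r = sqrt (dderiv \<phi> [h, h] x)"
  define nq where "nq = sqrt (dderiv \<phi> [q,q] x)"
  define nv where "nv = sqrt (dderiv \<phi> [v,v] x)"
  define kk where "kk = (\<lambda>s. dderiv \<phi> [q,v,v] (x + s *\<^sub>R h))"
  define kk' where "kk' = (\<lambda>s. dderiv \<phi> [h,q,v,v] (x + s *\<^sub>R h))"
  define \<Phi> where "\<Phi> = (\<lambda>s. 2 * nq * nv^2 * inverse ((1 - s * r)^3))"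
  have r0: "r \<ge> 0" unfolding r_def using psd[OF x] by simp
  have r1': "r < 1" using r1 unfolding r_def h_def .
  have nq0: "nq \<ge> 0" unfolding nq_def using psd[OF x] by simp
  have nv0: "nv \<ge> 0" unfolding nv_def using psd[OF x] by simp
  have inK: "x + s *\<^sub>R h \<in> K" if "0 \<le> s" "s \<le> 1" for s
    unfolding h_def using seg_in[OF x y that] .
  have key: "(kk has_real_derivative kk' s) (at s) \<and> (\<Phi> has_real_derivative 6 * r * nq * nv^2 / (1 - s * r)^4) (at s)
      \<and> \<bar>kk' s\<bar> \<le> 6 * r * nq * nv^2 / (1 - s * r)^4" if s: "0 \<le> s" "s \<le> 1" for s
  proof (intro conjI)
    have "s * r \<le> 1 * r" using s r0 by (intro mult_right_mono) auto
    then have c: "1 - s * r > 0" using r1' by simp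
    show "(kk has_real_derivative kk' s) (at s)" unfolding kk_def kk'_def
      by (rule seg_deriv) (use inK s in auto)
    have dc: "((\<lambda>s. (1 - s * r)^3) has_real_derivative (3 * (1 - s * r)^2 * (- r))) (at s)"
      by (auto intro!: derivative_eq_intros)
    have "(\<Phi> has_real_derivative 2 * nq * nv^2 * (- (inverse ((1 - s * r)^3) * (3 * (1 - s * r)^2 * (- r)) * inverse ((1 - s * r)^3)))) (at s)"
      unfolding \<Phi>_def by (intro DERIV_cmult DERIV_inverse'[OF dc]) (use c in simp)
    moreover have "2 * nq * nv^2 * (- (inverse ((1 - s * r)^3) * (3 * (1 - s * r)^2 * (- r)) * inverse ((1 - s * r)^3)))
        = 6 * r * nq * nv^2 / (1 - s * r)^4"
      using aux_deriv[of "1 - s * r" "nq * nv^2" r] c by (simp add: mult.assoc)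
    ultimately show "(\<Phi> has_real_derivative 6 * r * nq * nv^2 / (1 - s * r)^4) (at s)" by simp
    have z: "x + s *\<^sub>R h \<in> K" using inK s by simp
    have b4: "\<bar>kk' s\<bar> \<le> 6 * sqrt (dderiv \<phi> [h,h] (x + s *\<^sub>R h)) * sqrt (dderiv \<phi> [q,q] (x + s *\<^sub>R h))
         * dderiv \<phi> [v,v] (x + s *\<^sub>R h)"
      unfolding kk'_def by (rule D4_bound[OF z])
    have sb: "sqrt (dderiv \<phi> [h,h] (x + s *\<^sub>R h)) \<le> r / (1 - s * r)"
      using sigma_bound[OF x y r1 s] unfolding h_def r_def .
    have qb0: "dderiv \<phi> [q,q] (x + s *\<^sub>R h) * (1 - s * r)^2 \<le> nq^2"
      using psi_bound[OF x y r1 s, of q] psd[OF x, of q] unfolding nq_def h_def r_def by simp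
    have qb: "sqrt (dderiv \<phi> [q,q] (x + s *\<^sub>R h)) \<le> nq / (1 - s * r)"
    proof -
      have "sqrt (dderiv \<phi> [q,q] (x + s *\<^sub>R h) * (1 - s * r)^2) \<le> sqrt (nq^2)"
        using qb0 real_sqrt_le_mono by blast
      then have "sqrt (dderiv \<phi> [q,q] (x + s *\<^sub>R h)) * (1 - s * r) \<le> nq"
        using c nq0 by (simp add: real_sqrt_mult)
      then show ?thesis using c by (simp add: field_simps)
    qed
    have vb: "dderiv \<phi> [v,v] (x + s *\<^sub>R h) \<le> nv^2 / (1 - s * r)^2"
    proof -
      have "dderiv \<phi> [v,v] (x + s *\<^sub>R h) * (1 - s * r)^2 \<le> nv^2"
        using psi_bound[OF x y r1 s, of v] psd[OF x, of v] unfolding nv_def h_def r_def by simp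
      then show ?thesis using c by (simp add: field_simps)
    qed
    have p1: "sqrt (dderiv \<phi> [h,h] (x + s *\<^sub>R h)) \<ge> 0" "sqrt (dderiv \<phi> [q,q] (x + s *\<^sub>R h)) \<ge> 0"
      "dderiv \<phi> [v,v] (x + s *\<^sub>R h) \<ge> 0" using psd[OF z] by simp_all
    have "\<bar>kk' s\<bar> \<le> 6 * (r / (1 - s * r)) * (nq / (1 - s * r)) * (nv^2 / (1 - s * r)^2)"
      using b4 sb qb vb p1 c r0 nq0
      by (smt (verit, best) mult_mono mult_nonneg_nonneg divide_nonneg_pos zero_le_power2)
    also have "\<dots> = 6 * r * nq * nv^2 / (1 - s * r)^4"
      using c by (simp add: field_simps power2_eq_square power4_eq_xxxx)
    finally show "\<bar>kk' s\<bar> \<le> 6 * r * nq * nv^2 / (1 - s * r)^4" .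
  qed
  have m1: "\<Phi> 0 - kk 0 \<le> \<Phi> 1 - kk 1"
  proof (rule DERIV_nonneg_imp_nondecreasing[of 0 1])
    fix s :: real assume s: "0 \<le> s" "s \<le> 1"
    from key[OF s] show "\<exists>y. ((\<lambda>s. \<Phi> s - kk s) has_real_derivative y) (at s) \<and> 0 \<le> y"
      by (intro exI[of _ "6 * r * nq * nv^2 / (1 - s * r)^4 - kk' s"]) (auto intro: DERIV_diff)
  qed simp
  have m2: "\<Phi> 0 + kk 0 \<le> \<Phi> 1 + kk 1"
  proof (rule DERIV_nonneg_imp_nondecreasing[of 0 1])
    fix s :: real assume s: "0 \<le> s" "s \<le> 1"
    from key[OF s] show "\<exists>y. ((\<lambda>s. \<Phi> s + kk s) has_real_derivative y) (at s) \<and> 0 \<le> y"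
      by (intro exI[of _ "6 * r * nq * nv^2 / (1 - s * r)^4 + kk' s"]) (auto intro: DERIV_add)
  qed simp
  have "\<bar>kk 0 - kk 1\<bar> \<le> \<Phi> 1 - \<Phi> 0" using m1 m2 by linarith
  also have "\<dots> = 2 * nq * nv^2 * (inverse ((1 - r)^3) - 1)" unfolding \<Phi>_def by (simp add: algebra_simps)
  also have "\<dots> \<le> 6 / (1 - r)^3 * nv^2 * r * nq"
  proof -
    have c1: "(1 - r)^3 > 0" using r1' by simp
    have "1 - (1 - r)^3 \<le> 3 * r"
    proof -
      have "1 - (1 - r)^3 = 3 * r - r^2 * (3 - r)" by (simp add: power2_eq_square power3_eq_cube algebra_simps)
      moreover have "r^2 * (3 - r) \<ge> 0" using r1' by simp
      ultimately show ?thesis by linarith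
    qed
    moreover have gen: "inverse c - 1 \<le> 3 * r / c" if "c > 0" "1 - c \<le> 3 * r" for c :: real
    proof -
      have "(1 - c) / c \<le> 3 * r / c" using that by (intro divide_right_mono) auto
      moreover have "(1 - c) / c = inverse c - 1" using that by (simp add: field_simps)
      ultimately show ?thesis by simp
    qed
    ultimately have "inverse ((1 - r)^3) - 1 \<le> 3 * r / (1 - r)^3"
      using c1 by blast
    then have "2 * nq * nv^2 * (inverse ((1 - r)^3) - 1) \<le> 2 * nq * nv^2 * (3 * r / (1 - r)^3)"
      using nq0 by (intro mult_left_mono) auto
    then show ?thesis by (simp add: field_simps)
  qed
  finally show ?thesis unfolding kk_def nq_def nv_def r_def h_def by simp
qed

end

context hsc begin

lemma hess_inv: "z \<in> K \<Longrightarrow> hess \<phi> z ** matrix_inv (hess \<phi> z) = mat 1"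
proof -
  assume z: "z \<in> K"
  have "invertible (hess \<phi> z)" using hsc z unfolding hsc_barrier_def by blast
  then have "\<exists>A'. hess \<phi> z ** A' = mat 1 \<and> A' ** hess \<phi> z = mat 1" unfolding invertible_def .
  then show ?thesis unfolding matrix_inv_def by (rule someI2_ex) blast
qed

lemma dual_arg:
  assumes z: "z \<in> K" and C: "C \<ge> 0"
    and bnd: "\<And>q. \<bar>p \<bullet> q\<bar> \<le> C * sqrt (dderiv \<phi> [q,q] z)"
  shows "lnorm (matrix_inv (hess \<phi> z)) p \<le> C"
proof -
  define q where "q = matrix_inv (hess \<phi> z) *v p"
  have Hq: "hess \<phi> z *v q = p" unfolding q_def matrix_vector_mul_assoc hess_inv[OF z] by simp
  have pq: "p \<bullet> q = dderiv \<phi> [q,q] z"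
    using quad_hess[OF z, of q] unfolding Hq by (simp add: inner_commute)
  define Q where "Q = dderiv \<phi> [q,q] z"
  have Q0: "Q \<ge> 0" unfolding Q_def using psd[OF z] .
  have ln: "lnorm (matrix_inv (hess \<phi> z)) p = sqrt Q" unfolding lnorm_def q_def[symmetric] pq Q_def ..
  have "sqrt Q * sqrt Q \<le> C * sqrt Q" using bnd[of q] Q0 unfolding pq Q_def[symmetric] by simp
  then have "sqrt Q \<le> C" using C Q0
    by (metis less_eq_real_def mult_right_le_imp_le real_sqrt_ge_zero order.trans mult_eq_0_iff)
  then show ?thesis unfolding ln .
qed

lemma Dg_dot: "z \<in> K \<Longrightarrow> Dg \<phi> z v w \<bullet> q = dderiv \<phi> [q,v,w] z"
  unfolding Dg_def by (rule vec_dot) (use lin[of "[v,w]" z] in simp)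

lemma D3_lin2: "z \<in> K \<Longrightarrow> linear (\<lambda>a. dderiv \<phi> [q,a,b] z)"
proof -
  assume z: "z \<in> K"
  have "linear (\<lambda>a. dderiv \<phi> [a,q,b] z)" using lin[of "[q,b]" z] z by simp
  moreover have "dderiv \<phi> [q,a,b] z = dderiv \<phi> [a,q,b] z" for a using swap[of "[]" "[b]" z q a] z by simp
  ultimately show ?thesis by simp
qed

lemma D3_lin3: "z \<in> K \<Longrightarrow> linear (\<lambda>b. dderiv \<phi> [q,a,b] z)"
proof -
  assume z: "z \<in> K"
  have "dderiv \<phi> [q,a,b] z = dderiv \<phi> [q,b,a] z" for b using swap[of "[q]" "[]" z a b] z by simp
  then show ?thesis using D3_lin2[OF z, of q a] by simp
qed

lemma partA:
  assumes x: "x \<in> K" and y: "y \<in> K" and r1: "lnorm (hess \<phi> x) (y - x) < 1"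
  shows "lnorm (matrix_inv (hess \<phi> x)) (Dg \<phi> x v v - Dg \<phi> y v v)
           \<le> 6 / (1 - lnorm (hess \<phi> x) (y - x)) ^ 3 * (lnorm (hess \<phi> x) v)\<^sup>2
              * lnorm (hess \<phi> x) (y - x)"
proof (rule dual_arg[OF x])
  have r1': "sqrt (dderiv \<phi> [y - x, y - x] x) < 1" using r1 unfolding lnorm_hess[OF x] .
  show "0 \<le> 6 / (1 - lnorm (hess \<phi> x) (y - x)) ^ 3 * (lnorm (hess \<phi> x) v)\<^sup>2 * lnorm (hess \<phi> x) (y - x)"
    using r1' psd[OF x, of "y - x"] unfolding lnorm_hess[OF x] by simp
  fix q
  have "(Dg \<phi> x v v - Dg \<phi> y v v) \<bullet> q = dderiv \<phi> [q,v,v] x - dderiv \<phi> [q,v,v] y"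
    by (simp add: inner_diff_left Dg_dot x y)
  then show "\<bar>(Dg \<phi> x v v - Dg \<phi> y v v) \<bullet> q\<bar> \<le> 6 / (1 - lnorm (hess \<phi> x) (y - x)) ^ 3 * (lnorm (hess \<phi> x) v)\<^sup>2
              * lnorm (hess \<phi> x) (y - x) * sqrt (dderiv \<phi> [q,q] x)"
    using chi_bound[OF x y r1', of q v] unfolding lnorm_hess[OF x] by simp
qed

lemma partB:
  assumes x: "x \<in> K"
  shows "lnorm (matrix_inv (hess \<phi> x)) (Dg \<phi> x v v - Dg \<phi> x w w)
           \<le> 2 * lnorm (hess \<phi> x) (v - w) * lnorm (hess \<phi> x) (v + w)"
proof (rule dual_arg[OF x])
  show "0 \<le> 2 * lnorm (hess \<phi> x) (v - w) * lnorm (hess \<phi> x) (v + w)"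
    using psd[OF x] unfolding lnorm_hess[OF x] by simp
  fix q
  note L = linear_add[OF D3_lin2[OF x]] linear_diff[OF D3_lin2[OF x]]
    linear_add[OF D3_lin3[OF x]] linear_diff[OF D3_lin3[OF x]]
  have sw: "dderiv \<phi> [q,v,w] x = dderiv \<phi> [q,w,v] x" using swap[of "[q]" "[]" x v w] x by simp
  have "(Dg \<phi> x v v - Dg \<phi> x w w) \<bullet> q = dderiv \<phi> [q,v,v] x - dderiv \<phi> [q,w,w] x"
    by (simp add: inner_diff_left Dg_dot x)
  also have "\<dots> = dderiv \<phi> [q, v - w, v + w] x" by (simp add: L sw)
  finally have e: "(Dg \<phi> x v v - Dg \<phi> x w w) \<bullet> q = dderiv \<phi> [q, v - w, v + w] x" .
  show "\<bar>(Dg \<phi> x v v - Dg \<phi> x w w) \<bullet> q\<bar> \<le> 2 * lnorm (hess \<phi> x) (v - w) * lnorm (hess \<phi> x) (v + w) * sqrt (dderiv \<phi> [q,q] x)"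
    unfolding e lnorm_hess[OF x] using D3_bound[OF x, of q "v - w" "v + w"] by (simp add: algebra_simps)
qed

end

theorem mainTheorem6:
  fixes K :: "(real^'n) set" and \<phi> :: "real^'n \<Rightarrow> real"
  assumes "open K" and "convex K" and "hsc_barrier K \<phi>"
    and "x \<in> K" and "y \<in> K" and "lnorm (hess \<phi> x) (y - x) < 1"
  shows "(\<forall>v. lnorm (matrix_inv (hess \<phi> x)) (Dg \<phi> x v v - Dg \<phi> y v v)
           \<le> 6 / (1 - lnorm (hess \<phi> x) (y - x)) ^ 3 * (lnorm (hess \<phi> x) v)\<^sup>2
              * lnorm (hess \<phi> x) (y - x))
         \<and> (\<forall>v w. lnorm (matrix_inv (hess \<phi> x)) (Dg \<phi> x v v - Dg \<phi> x w w)
           \<le> 2 * lnorm (hess \<phi> x) (v - w) * lnorm (hess \<phi> x) (v + w))"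
proof -
  interpret H: hsc K \<phi> by (rule hsc.intro) (use assms in auto)
  show ?thesis using H.partA[OF assms(4,5,6)] H.partB[OF assms(4)] by blast
qed

end
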